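(* Let $A$ be a finite involutive alphabet and let $\Gamma$ be a rooted involutive $A$-tree. Then $\Gamma$ is deterministic and context-free if and only if $\Gamma$ is isomorphic, as a rooted involutive $A$-graph (without node labels), to $\Gamma(p)$ for some state $p$ of a reduced pDFA over $A$.
   Context: An $A$-graph is a pair $(V,E)$ with $E\subseteq V\times A\times V$; it is deterministic if $(u,a,v),(u,a,v')\in E$ imply $v=v'$; it is involutive if $(u,a,v)\in E\iff(v,a^{-1},u)\in E$. A path is reduced if no edge in it is immediately followed by its inverse; a rooted involutive graph is a tree if each vertex is the end of a unique reduced path from the root. Context-free: for a connected rooted involutive graph, the level of a node is its distance from the root; for $v$ at level $n$ the end-cone $\Gamma(v)$ is the connected component containing $v$ of the subgraph induced on nodes of level $\ge n$, and its nodes of level $n$ are its frontier points. An end-isomorphism is a label-preserving graph isomorphism between two end-cones mapping frontier points onto frontier points. A connected involutive $A$-graph ($A$ finite involutive) is context-free if it has uniformly bounded degree and for some choice of root there are only finitely many end-isomorphism classes of end-cones. A partial deterministic finite automaton (pDFA) over a finite alphabet $A$ is a finite deterministic $A$-graph $(Q,T)$ (states and transitions). For a state $p$, $\Gamma(p)$ is the graph whose nodes are the runs (finite paths) of the pDFA starting at $p$, with the empty run as root and an edge from a run $\varrho$ to $\varrho\tau$ labeled by the label of the transition $\tau$, then closed under adding all inverse edges $(v,a^{-1},u)$ (viewing $A$ as involutive, passing to $A^{\pm1}=A\uplus A^{-1}$ if necessary). A pDFA over an involutive alphabet is reduced if it contains no path labeled $aa^{-1}$ for any $a\in A$. *)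

theory Defs
  imports Main
begin

definition involutive_alphabet :: "'a set \<Rightarrow> ('a \<Rightarrow> 'a) \<Rightarrow> bool" where
  "involutive_alphabet A ainv \<longleftrightarrow> (\<forall>a\<in>A. ainv a \<in> A \<and> ainv (ainv a) = a)"

definition a_graph :: "'a set \<Rightarrow> 'v set \<Rightarrow> ('v \<times> 'a \<times> 'v) set \<Rightarrow> bool" where
  "a_graph A V E \<longleftrightarrow> E \<subseteq> V \<times> A \<times> V"

definition deterministic :: "('v \<times> 'a \<times> 'v) set \<Rightarrow> bool" where
  "deterministic E \<longleftrightarrow> (\<forall>u a v v'. (u,a,v) \<in> E \<and> (u,a,v') \<in> E \<longrightarrow> v = v')"

definition involutive_graph :: "('a \<Rightarrow> 'a) \<Rightarrow> ('v \<times> 'a \<times> 'v) set \<Rightarrow> bool" where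
  "involutive_graph ainv E \<longleftrightarrow> (\<forall>u a v. (u,a,v) \<in> E \<longleftrightarrow> (v, ainv a, u) \<in> E)"

definition inv_edge :: "('a \<Rightarrow> 'a) \<Rightarrow> 'v \<times> 'a \<times> 'v \<Rightarrow> 'v \<times> 'a \<times> 'v" where
  "inv_edge ainv e = (case e of (u,a,v) \<Rightarrow> (v, ainv a, u))"

fun gpath :: "('v \<times> 'a \<times> 'v) set \<Rightarrow> 'v \<Rightarrow> ('v \<times> 'a \<times> 'v) list \<Rightarrow> 'v \<Rightarrow> bool" where
  "gpath E u [] v \<longleftrightarrow> u = v"
| "gpath E u (e # es) v \<longleftrightarrow> e \<in> E \<and> fst e = u \<and> gpath E (snd (snd e)) es v"

definition reduced_path :: "('a \<Rightarrow> 'a) \<Rightarrow> ('v \<times> 'a \<times> 'v) list \<Rightarrow> bool" where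
  "reduced_path ainv es \<longleftrightarrow> (\<forall>i. Suc i < length es \<longrightarrow> es ! Suc i \<noteq> inv_edge ainv (es ! i))"

definition rooted_tree :: "'a set \<Rightarrow> ('a \<Rightarrow> 'a) \<Rightarrow> 'v set \<Rightarrow> ('v \<times> 'a \<times> 'v) set \<Rightarrow> 'v \<Rightarrow> bool" where
  "rooted_tree A ainv V E r \<longleftrightarrow> a_graph A V E \<and> involutive_graph ainv E \<and> r \<in> V \<and>
     (\<forall>v\<in>V. \<exists>!es. gpath E r es v \<and> reduced_path ainv es)"

definition connected_graph :: "'v set \<Rightarrow> ('v \<times> 'a \<times> 'v) set \<Rightarrow> bool" where
  "connected_graph V E \<longleftrightarrow> (\<forall>u\<in>V. \<forall>v\<in>V. \<exists>es. gpath E u es v)"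

definition bounded_degree :: "'v set \<Rightarrow> ('v \<times> 'a \<times> 'v) set \<Rightarrow> bool" where
  "bounded_degree V E \<longleftrightarrow> (\<exists>N::nat. \<forall>v\<in>V. finite {e \<in> E. fst e = v} \<and> card {e \<in> E. fst e = v} \<le> N)"

definition gdist :: "('v \<times> 'a \<times> 'v) set \<Rightarrow> 'v \<Rightarrow> 'v \<Rightarrow> nat" where
  "gdist E u v = (LEAST n. \<exists>es. gpath E u es v \<and> length es = n)"

definition level :: "('v \<times> 'a \<times> 'v) set \<Rightarrow> 'v \<Rightarrow> 'v \<Rightarrow> nat" where
  "level E r v = gdist E r v"

definition end_cone :: "'v set \<Rightarrow> ('v \<times> 'a \<times> 'v) set \<Rightarrow> 'v \<Rightarrow> 'v \<Rightarrow> 'v set" where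
  "end_cone V E r v =
    (let W = {x \<in> V. level E r x \<ge> level E r v};
         EW = {e \<in> E. fst e \<in> W \<and> snd (snd e) \<in> W}
     in {x \<in> W. \<exists>es. gpath EW v es x})"

definition frontier :: "'v set \<Rightarrow> ('v \<times> 'a \<times> 'v) set \<Rightarrow> 'v \<Rightarrow> 'v \<Rightarrow> 'v set" where
  "frontier V E r v = {x \<in> end_cone V E r v. level E r x = level E r v}"

definition end_isomorphic :: "'v set \<Rightarrow> ('v \<times> 'a \<times> 'v) set \<Rightarrow> 'v \<Rightarrow> 'v \<Rightarrow> 'v \<Rightarrow> bool" where
  "end_isomorphic V E r u v \<longleftrightarrow>
    (\<exists>f. bij_betw f (end_cone V E r u) (end_cone V E r v) \<and>
      (\<forall>x\<in>end_cone V E r u. \<forall>y\<in>end_cone V E r u. \<forall>a. (x,a,y) \<in> E \<longleftrightarrow> (f x, a, f y) \<in> E) \<and>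
      f ` frontier V E r u = frontier V E r v)"

definition context_free :: "'a set \<Rightarrow> ('a \<Rightarrow> 'a) \<Rightarrow> 'v set \<Rightarrow> ('v \<times> 'a \<times> 'v) set \<Rightarrow> bool" where
  "context_free A ainv V E \<longleftrightarrow> finite A \<and> involutive_alphabet A ainv \<and> a_graph A V E \<and>
     involutive_graph ainv E \<and> connected_graph V E \<and> bounded_degree V E \<and>
     (\<exists>r\<in>V. \<exists>F. finite F \<and> F \<subseteq> V \<and> (\<forall>v\<in>V. \<exists>u\<in>F. end_isomorphic V E r u v))"

text \<open>A pDFA: finite deterministic A-graph (Q,T). States are taken to be natural numbers
  (w.l.o.g., every finite state set can be renamed into nat).\<close>
definition pDFA :: "'a set \<Rightarrow> nat set \<Rightarrow> (nat \<times> 'a \<times> nat) set \<Rightarrow> bool" where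
  "pDFA A Q T \<longleftrightarrow> finite Q \<and> a_graph A Q T \<and> deterministic T"

definition reduced_pDFA :: "'a set \<Rightarrow> ('a \<Rightarrow> 'a) \<Rightarrow> nat set \<Rightarrow> (nat \<times> 'a \<times> nat) set \<Rightarrow> bool" where
  "reduced_pDFA A ainv Q T \<longleftrightarrow> pDFA A Q T \<and>
     (\<forall>q a q' s. (q,a,q') \<in> T \<longrightarrow> (q', ainv a, s) \<notin> T)"

text \<open>The graph Gamma(p): nodes are runs starting at p, root is the empty run.\<close>
definition runs :: "(nat \<times> 'a \<times> nat) set \<Rightarrow> nat \<Rightarrow> (nat \<times> 'a \<times> nat) list set" where
  "runs T p = {\<rho>. \<exists>q. gpath T p \<rho> q}"

definition run_edges :: "('a \<Rightarrow> 'a) \<Rightarrow> (nat \<times> 'a \<times> nat) set \<Rightarrow> nat \<Rightarrow>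
    ((nat \<times> 'a \<times> nat) list \<times> 'a \<times> (nat \<times> 'a \<times> nat) list) set" where
  "run_edges ainv T p =
     {(\<rho>, fst (snd \<tau>), \<rho> @ [\<tau>]) | \<rho> \<tau>. \<rho> @ [\<tau>] \<in> runs T p} \<union>
     {(\<rho> @ [\<tau>], ainv (fst (snd \<tau>)), \<rho>) | \<rho> \<tau>. \<rho> @ [\<tau>] \<in> runs T p}"

definition rooted_iso :: "'v set \<Rightarrow> ('v \<times> 'a \<times> 'v) set \<Rightarrow> 'v \<Rightarrow>
    'w set \<Rightarrow> ('w \<times> 'a \<times> 'w) set \<Rightarrow> 'w \<Rightarrow> bool" where
  "rooted_iso V1 E1 r1 V2 E2 r2 \<longleftrightarrow>
    (\<exists>f. bij_betw f V1 V2 \<and> f r1 = r2 \<and>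
      (\<forall>x\<in>V1. \<forall>y\<in>V1. \<forall>a. (x,a,y) \<in> E1 \<longleftrightarrow> (f x, a, f y) \<in> E2))"

end

theory Submission
  imports Defs
begin


lemma gpath_append[simp]: "gpath E u (xs @ ys) w \<longleftrightarrow> (\<exists>v. gpath E u xs v \<and> gpath E v ys w)"
  by (induction xs arbitrary: u) auto

lemma gpath_end_unique: "gpath E u es v \<Longrightarrow> gpath E u es v' \<Longrightarrow> v = v'"
  by (induction es arbitrary: u) auto

lemma gpath_subset: "gpath E u es v \<Longrightarrow> set es \<subseteq> E' \<Longrightarrow> gpath E' u es v"
  by (induction es arbitrary: u) auto

lemma gpath_set: "gpath E u es v \<Longrightarrow> set es \<subseteq> E"
  by (induction es arbitrary: u) auto

lemma gpath_V: "a_graph A V E \<Longrightarrow> u \<in> V \<Longrightarrow> gpath E u es v \<Longrightarrow> v \<in> V"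
  by (induction es arbitrary: u) (auto simp: a_graph_def)

lemma gpath_rev: "involutive_graph ainv E \<Longrightarrow> gpath E u es v \<Longrightarrow> gpath E v (rev (map (inv_edge ainv) es)) u"
proof (induction es arbitrary: u)
  case Nil then show ?case by simp
next
  case (Cons e es)
  obtain x a w where e: "e = (x,a,w)" by (cases e) auto
  with Cons show ?case by (auto simp: inv_edge_def involutive_graph_def)
qed

lemma gpath_nth: "gpath E u es v \<Longrightarrow> Suc i < length es \<Longrightarrow> fst (es ! Suc i) = snd (snd (es ! i))"
proof (induction es arbitrary: u i)
  case Nil then show ?case by simp
next
  case (Cons e es)
  show ?case
  proof (cases i)
    case 0 with Cons show ?thesis by (cases es) auto
  next
    case (Suc j) with Cons show ?thesis by auto
  qed
qed

lemma gpath_last: "gpath E u es v \<Longrightarrow> es \<noteq> [] \<Longrightarrow> v = snd (snd (last es))"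
  by (induction es arbitrary: u) (auto split: if_splits)

lemma reduced_Nil[simp]: "reduced_path ainv []"
  by (simp add: reduced_path_def)

lemma reduced_Cons: "reduced_path ainv (e # es) \<longleftrightarrow> (es \<noteq> [] \<longrightarrow> hd es \<noteq> inv_edge ainv e) \<and> reduced_path ainv es"
proof
  assume h: "reduced_path ainv (e # es)"
  have "es \<noteq> [] \<longrightarrow> hd es \<noteq> inv_edge ainv e"
    using h[unfolded reduced_path_def, rule_format, of 0] by (cases es) auto
  moreover have "reduced_path ainv es"
    unfolding reduced_path_def
  proof (intro allI impI)
    fix i assume "Suc i < length es"
    then show "es ! Suc i \<noteq> inv_edge ainv (es ! i)"
      using h[unfolded reduced_path_def, rule_format, of "Suc i"] by auto
  qed
  ultimately show "(es \<noteq> [] \<longrightarrow> hd es \<noteq> inv_edge ainv e) \<and> reduced_path ainv es" by blast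
next
  assume h: "(es \<noteq> [] \<longrightarrow> hd es \<noteq> inv_edge ainv e) \<and> reduced_path ainv es"
  show "reduced_path ainv (e # es)"
    unfolding reduced_path_def
  proof (intro allI impI)
    fix i assume i: "Suc i < length (e # es)"
    show "(e # es) ! Suc i \<noteq> inv_edge ainv ((e # es) ! i)"
    proof (cases i)
      case 0 with h i show ?thesis by (cases es) auto
    next
      case (Suc j) with h i show ?thesis by (auto simp: reduced_path_def)
    qed
  qed
qed

lemma reduced_append: "reduced_path ainv (xs @ ys) \<longleftrightarrow> reduced_path ainv xs \<and> reduced_path ainv ys \<and>
   (xs \<noteq> [] \<and> ys \<noteq> [] \<longrightarrow> hd ys \<noteq> inv_edge ainv (last xs))"
  by (induction xs) (auto simp: reduced_Cons)

lemma path_label_det: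
  assumes "deterministic E"
  shows "gpath E u es1 w1 \<Longrightarrow> gpath E u es2 w2 \<Longrightarrow> map (\<lambda>e. fst (snd e)) es1 = map (\<lambda>e. fst (snd e)) es2 \<Longrightarrow> es1 = es2"
proof (induction es1 arbitrary: u es2)
  case Nil then show ?case by simp
next
  case (Cons e es1)
  then obtain e2 es2' where es2: "es2 = e2 # es2'" by (cases es2) auto
  have "e2 = e" using Cons.prems assms es2 unfolding deterministic_def
    by (cases e; cases e2) auto
  with Cons es2 show ?case by auto
qed

fun lcp :: "'x list \<Rightarrow> 'x list \<Rightarrow> nat" where
  "lcp (x # xs) (y # ys) = (if x = y then Suc (lcp xs ys) else 0)"
| "lcp _ _ = 0"

lemma lcp_le1: "lcp xs ys \<le> length xs"
  by (induction xs ys rule: lcp.induct) auto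
lemma lcp_le2: "lcp xs ys \<le> length ys"
  by (induction xs ys rule: lcp.induct) auto
lemma lcp_take: "take (lcp xs ys) xs = take (lcp xs ys) ys"
  by (induction xs ys rule: lcp.induct) auto
lemma lcp_same[simp]: "lcp xs xs = length xs"
  by (induction xs) auto
lemma lcp_Nil[simp]: "lcp [] ys = 0"
  by (cases ys) auto
lemma lcp_append: "lcp xs (ys @ zs) = (if lcp xs ys < length ys then lcp xs ys else length ys + lcp (drop (length ys) xs) zs)"
proof (induction xs ys rule: lcp.induct)
  case (1 x xs y ys) then show ?case by auto
next
  case ("2_1" ys) then show ?case by (cases ys; cases zs) auto
next
  case ("2_2" xs) then show ?case by simp
qed
lemma lcp_single: "lcp xs [e] \<le> 1"
  using lcp_le2[of xs "[e]"] by simp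

lemma lcp_full: "lcp xs ys = length ys \<Longrightarrow> xs = ys @ drop (length ys) xs"
proof -
  assume h: "lcp xs ys = length ys"
  have "take (length ys) xs = ys" using lcp_take[of xs ys] h by simp
  then show ?thesis by (metis append_take_drop_id)
qed



locale rtree =
  fixes A :: "'a set" and ainv :: "'a \<Rightarrow> 'a" and V :: "'v set" and E :: "('v \<times> 'a \<times> 'v) set" and r :: 'v
  assumes rt: "rooted_tree A ainv V E r" and ia: "involutive_alphabet A ainv"
begin

lemma ag: "a_graph A V E" and invg: "involutive_graph ainv E" and rV: "r \<in> V"
  and uq: "\<forall>v\<in>V. \<exists>!es. gpath E r es v \<and> reduced_path ainv es"
  using rt unfolding rooted_tree_def by auto

lemma edgeV: "(u,a,w) \<in> E \<Longrightarrow> u \<in> V \<and> w \<in> V \<and> a \<in> A"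
  using ag unfolding a_graph_def by auto

lemma edge_sym: "(u,a,w) \<in> E \<Longrightarrow> (w, ainv a, u) \<in> E"
  using invg unfolding involutive_graph_def by auto

lemma ainv2: "a \<in> A \<Longrightarrow> ainv (ainv a) = a"
  using ia unfolding involutive_alphabet_def by auto

definition P :: "'v \<Rightarrow> ('v \<times> 'a \<times> 'v) list" where
  "P v = (THE es. gpath E r es v \<and> reduced_path ainv es)"

lemma P: "v \<in> V \<Longrightarrow> gpath E r (P v) v \<and> reduced_path ainv (P v)"
  unfolding P_def using uq by (metis (mono_tags, lifting) theI')

lemma P_unique: "gpath E r es v \<Longrightarrow> reduced_path ainv es \<Longrightarrow> P v = es"
proof -
  assume h: "gpath E r es v" "reduced_path ainv es"
  then have "v \<in> V" using gpath_V[OF ag rV] by blast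
  then show ?thesis using uq h unfolding P_def by (metis (mono_tags, lifting) the1_equality)
qed

lemma P_r[simp]: "P r = []"
  by (rule P_unique) auto

lemma P_inj: "x \<in> V \<Longrightarrow> y \<in> V \<Longrightarrow> P x = P y \<Longrightarrow> x = y"
  using P gpath_end_unique by metis

lemma P_prefix: "v \<in> V \<Longrightarrow> P v = xs @ ys \<Longrightarrow> \<exists>y. y \<in> V \<and> gpath E r xs y \<and> P y = xs \<and> gpath E y ys v"
proof -
  assume v: "v \<in> V" and h: "P v = xs @ ys"
  from P[OF v] h obtain y where y: "gpath E r xs y" "gpath E y ys v" and red: "reduced_path ainv (xs @ ys)" by auto
  have "P y = xs" using P_unique y(1) red reduced_append by metis
  moreover have "y \<in> V" using gpath_V[OF ag rV y(1)] .
  ultimately show ?thesis using y by blast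
qed

lemma P_len_less: "v \<in> V \<Longrightarrow> P v = xs @ [e] \<Longrightarrow> P (fst e) = xs \<and> fst e \<in> V"
proof -
  assume v: "v \<in> V" and h: "P v = xs @ [e]"
  from P_prefix[OF v h] obtain y where "y \<in> V" "gpath E r xs y" "P y = xs" "gpath E y [e] v" by blast
  then show ?thesis by auto
qed

lemma P_snoc_tgt: "v \<in> V \<Longrightarrow> P v = xs @ [e] \<Longrightarrow> snd (snd e) = v \<and> e \<in> E"
  using P[of v] by auto

lemma edge_dich:
  assumes e: "(u,a,w) \<in> E"
  shows "P w = P u @ [(u,a,w)] \<or> P u = P w @ [(w, ainv a, u)]"
proof -
  have uV: "u \<in> V" and wV: "w \<in> V" and aA: "a \<in> A" using edgeV[OF e] by auto
  have pu: "gpath E r (P u) u" "reduced_path ainv (P u)" using P[OF uV] by auto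
  show ?thesis
  proof (cases "P u \<noteq> [] \<and> (u,a,w) = inv_edge ainv (last (P u))")
    case True
    then obtain xs where xs: "P u = xs @ [last (P u)]" by (metis append_butlast_last_id)
    obtain x b y where l: "last (P u) = (x,b,y)" by (cases "last (P u)") auto
    from True l have "u = y" "a = ainv b" "w = x" by (auto simp: inv_edge_def)
    have bA: "b \<in> A" using P_snoc_tgt[OF uV xs] l edgeV by auto
    have "P w = xs" using P_len_less[OF uV xs] l \<open>w = x\<close> by auto
    moreover have "ainv a = b" using \<open>a = ainv b\<close> ainv2[OF bA] by simp
    ultimately have "P u = P w @ [(w, ainv a, u)]" using xs l \<open>u = y\<close> \<open>w = x\<close> by simp
    then show ?thesis by blast
  next
    case False
    have "gpath E r (P u @ [(u,a,w)]) w" using pu e by auto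
    moreover have "reduced_path ainv (P u @ [(u,a,w)])"
      using False pu(2) unfolding reduced_append by (auto simp: reduced_path_def)
    ultimately show ?thesis using P_unique by blast
  qed
qed

definition D :: "'v \<Rightarrow> 'v set" where
  "D v = {x \<in> V. \<exists>zs. P x = P v @ zs}"

lemma D_path:
  assumes x: "x \<in> V" and h: "P x = P v @ es" and v: "v \<in> V"
  shows "gpath E v es x \<and> (\<forall>e\<in>set es. fst e \<in> D v \<and> snd (snd e) \<in> D v \<and> P (snd (snd e)) = P (fst e) @ [e])"
proof -
  from P_prefix[OF x h] obtain y where y: "y \<in> V" "P y = P v" "gpath E y es x" by blast
  have "y = v" using P_inj y v by auto
  moreover have "\<forall>e\<in>set es. fst e \<in> D v \<and> snd (snd e) \<in> D v \<and> P (snd (snd e)) = P (fst e) @ [e]"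
  proof
    fix e assume "e \<in> set es"
    then obtain es1 es2 where es: "es = es1 @ e # es2" by (metis split_list)
    from h es have h1: "P x = (P v @ es1 @ [e]) @ es2" by simp
    from P_prefix[OF x h1] obtain z where z: "z \<in> V" "gpath E r (P v @ es1 @ [e]) z" "P z = P v @ es1 @ [e]" by blast
    have ztgt: "z = snd (snd e)" using z(2) by auto
    from P_len_less[of z "P v @ es1" e] z have f: "P (fst e) = P v @ es1" "fst e \<in> V" by auto
    show "fst e \<in> D v \<and> snd (snd e) \<in> D v \<and> P (snd (snd e)) = P (fst e) @ [e]"
      using f z ztgt unfolding D_def by auto
  qed
  ultimately show ?thesis using y by blast
qed

lemma D_self: "v \<in> V \<Longrightarrow> v \<in> D v"
  unfolding D_def by auto

lemma D_sub: "D v \<subseteq> V"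
  unfolding D_def by auto

lemma connected: "connected_graph V E"
  unfolding connected_graph_def
proof (intro ballI)
  fix u v assume u: "u \<in> V" and v: "v \<in> V"
  have "gpath E u (rev (map (inv_edge ainv) (P u))) r" using gpath_rev[OF invg] P[OF u] by blast
  then have "gpath E u (rev (map (inv_edge ainv) (P u)) @ P v) v" using P[OF v] by auto
  then show "\<exists>es. gpath E u es v" by blast
qed

end



context rtree
begin

definition gg :: "'v \<Rightarrow> 'v \<Rightarrow> nat" where
  "gg r' y = length (P r') + length (P y) - 2 * lcp (P r') (P y)"

lemma gg_step:
  assumes "P z = P y @ [e]"
  shows "gg r' z \<le> gg r' y + 1 \<and> gg r' y \<le> gg r' z + 1"
proof -
  define R where "R = P r'"
  define k where "k = lcp R (P y)"
  define k' where "k' = lcp R (P z)"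
  have k1: "k \<le> length R" "k \<le> length (P y)" unfolding k_def using lcp_le1 lcp_le2 by auto
  have k'1: "k' \<le> length R" "k' \<le> length (P y) + 1" unfolding k'_def using lcp_le1 lcp_le2[of R "P z"] assms by auto
  have k'2: "k' = (if k < length (P y) then k else length (P y) + lcp (drop (length (P y)) R) [e])"
    unfolding k'_def k_def assms lcp_append by simp
  have l: "lcp (drop (length (P y)) R) [e] \<le> 1" by (rule lcp_single)
  have gy: "gg r' y = length R + length (P y) - 2 * k" unfolding gg_def R_def k_def by simp
  have gz: "gg r' z = length R + length (P y) + 1 - 2 * k'" unfolding gg_def R_def k'_def assms by simp
  show ?thesis
  proof (cases "k < length (P y)")
    case True then have "k' = k" using k'2 by simp
    then show ?thesis using gy gz k1 by linarith
  next
    case False then have "k = length (P y)" "k' = length (P y) + lcp (drop (length (P y)) R) [e]"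
      using k'2 k1 by auto
    then show ?thesis using gy gz k1 k'1 l by linarith
  qed
qed

lemma gg_edge: "(y,a,z) \<in> E \<Longrightarrow> gg r' z \<le> gg r' y + 1"
  using edge_dich gg_step by (metis add.commute)

lemma gg_path: "gpath E y es z \<Longrightarrow> gg r' z \<le> gg r' y + length es"
proof (induction es arbitrary: y)
  case Nil then show ?case by simp
next
  case (Cons e es)
  obtain y' a w where e: "e = (y',a,w)" by (cases e) auto
  with Cons.prems have "y' = y" "(y,a,w) \<in> E" "gpath E w es z" by auto
  have "gg r' z \<le> gg r' w + length es" using Cons.IH \<open>gpath E w es z\<close> by blast
  moreover have "gg r' w \<le> gg r' y + 1" using gg_edge \<open>(y,a,w) \<in> E\<close> by blast
  ultimately show ?case by simp
qed

lemma gg_root: "gg r' r' = 0"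
  unfolding gg_def by simp

lemma gg_exists:
  assumes x: "x \<in> V" and r': "r' \<in> V"
  shows "\<exists>es. gpath E r' es x \<and> length es = gg r' x"
proof -
  define R where "R = P r'"
  define k where "k = lcp R (P x)"
  have tk: "take k R = take k (P x)" unfolding k_def by (rule lcp_take)
  have k1: "k \<le> length R" "k \<le> length (P x)" unfolding k_def using lcp_le1 lcp_le2 by auto
  have "P r' = take k R @ drop k R" unfolding R_def by simp
  from P_prefix[OF r' this] obtain c where c: "gpath E r (take k R) c" "gpath E c (drop k R) r'" by blast
  have "P x = take k (P x) @ drop k (P x)" by simp
  from P_prefix[OF x this] obtain c' where c': "gpath E r (take k (P x)) c'" "gpath E c' (drop k (P x)) x" by blast
  have "c = c'" using c(1) c'(1) tk gpath_end_unique by metis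
  have p1: "gpath E r' (rev (map (inv_edge ainv) (drop k R))) c" using gpath_rev[OF invg c(2)] .
  have "gpath E r' (rev (map (inv_edge ainv) (drop k R)) @ drop k (P x)) x"
    using p1 c'(2) \<open>c = c'\<close> by auto
  moreover have "length (rev (map (inv_edge ainv) (drop k R)) @ drop k (P x)) = gg r' x"
    unfolding gg_def R_def[symmetric] k_def[symmetric] using k1 by simp
  ultimately show ?thesis by blast
qed

lemma gdist_eq:
  assumes x: "x \<in> V" and r': "r' \<in> V"
  shows "gdist E r' x = gg r' x"
  unfolding gdist_def
proof (rule Least_equality)
  show "\<exists>es. gpath E r' es x \<and> length es = gg r' x" by (rule gg_exists[OF x r'])
next
  fix n assume "\<exists>es. gpath E r' es x \<and> length es = n"
  then obtain es where "gpath E r' es x" "length es = n" by blast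
  then show "gg r' x \<le> n" using gg_path[of r' es x r'] gg_root[of r'] by simp
qed

lemma level_eq: "x \<in> V \<Longrightarrow> r' \<in> V \<Longrightarrow> level E r' x = gg r' x"
  unfolding level_def by (rule gdist_eq)

lemma lcp_D:
  assumes good: "lcp (P r') (P v) < length (P v)" and x: "P x = P v @ zs"
  shows "lcp (P r') (P x) = lcp (P r') (P v)"
  using good unfolding x lcp_append by simp

lemma gg_D:
  assumes good: "lcp (P r') (P v) < length (P v)" and x: "P x = P v @ zs"
  shows "gg r' x = gg r' v + length zs"
proof -
  have "lcp (P r') (P v) \<le> length (P r')" by (rule lcp_le1)
  then show ?thesis using lcp_D[OF good x] unfolding gg_def x using good by simp
qed

lemma cone:
  assumes r': "r' \<in> V" and v: "v \<in> V" and good: "lcp (P r') (P v) < length (P v)"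
  shows "end_cone V E r' v = D v \<and> frontier V E r' v = {v}"
proof -
  define W where "W = {x \<in> V. level E r' x \<ge> level E r' v}"
  define EW where "EW = {e \<in> E. fst e \<in> W \<and> snd (snd e) \<in> W}"
  have ce: "end_cone V E r' v = {x \<in> W. \<exists>es. gpath EW v es x}"
    unfolding end_cone_def W_def EW_def Let_def by simp
  have W: "W = {x \<in> V. gg r' x \<ge> gg r' v}"
    unfolding W_def using level_eq[OF _ r'] v by auto
  have s1: "gpath EW y es x \<Longrightarrow> y \<in> D v \<Longrightarrow> x \<in> D v" for es y x
  proof (induction es arbitrary: y)
    case Nil then show ?case by simp
  next
    case (Cons e es)
    obtain y' a z where e: "e = (y',a,z)" by (cases e) auto
    with Cons.prems have yy: "y' = y" and eE: "(y,a,z) \<in> E" and zW: "z \<in> W" and pz: "gpath EW z es x"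
      unfolding EW_def by auto
    from Cons.prems(2) obtain zs where yD: "y \<in> V" "P y = P v @ zs" unfolding D_def by auto
    have zV: "z \<in> V" using edgeV[OF eE] by auto
    have "z \<in> D v"
    proof (cases "P z = P y @ [(y,a,z)]")
      case True then show ?thesis using yD zV unfolding D_def by auto
    next
      case False
      then have pyz: "P y = P z @ [(z, ainv a, y)]" using edge_dich[OF eE] by auto
      show ?thesis
      proof (cases "zs = []")
        case True
        then have pv: "P v = P z @ [(z, ainv a, y)]" using pyz yD by simp
        define k where "k = lcp (P r') (P v)"
        have kz: "lcp (P r') (P z) = k"
        proof (cases "lcp (P r') (P z) < length (P z)")
          case True then show ?thesis unfolding k_def pv lcp_append by simp
        next
          case False
          then have "lcp (P r') (P z) = length (P z)" using lcp_le2 le_neq_implies_less by blast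
          moreover have "k \<ge> length (P z)" unfolding k_def pv lcp_append using False by simp
          moreover have "k < length (P z) + 1" using good pv unfolding k_def by simp
          ultimately show ?thesis by simp
        qed
        have "k \<le> length (P r')" unfolding k_def by (rule lcp_le1)
        moreover have "k < length (P z) + 1" using good pv unfolding k_def by simp
        moreover have "gg r' v = length (P r') + (length (P z) + 1) - 2 * k"
          unfolding gg_def k_def using pv by simp
        moreover have "gg r' z = length (P r') + length (P z) - 2 * k"
          unfolding gg_def kz by simp
        ultimately have "gg r' z < gg r' v" by linarith
        then show ?thesis using zW W by auto
      next
        case False
        then have "P z = P v @ butlast zs"
          using pyz yD by (metis append_assoc append_butlast_last_id butlast_append butlast_snoc)
        then show ?thesis using zV unfolding D_def by auto
      qed
    qed
    then show ?case using Cons.IH pz by blast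
  qed
  have cone_sub: "end_cone V E r' v \<subseteq> D v"
    using s1 D_self[OF v] unfolding ce by blast
  have sub_cone: "D v \<subseteq> end_cone V E r' v"
  proof
    fix x assume xD: "x \<in> D v"
    then obtain zs where x: "x \<in> V" "P x = P v @ zs" unfolding D_def by auto
    from D_path[OF x v] have pth: "gpath E v zs x" and
      allD: "\<forall>e\<in>set zs. fst e \<in> D v \<and> snd (snd e) \<in> D v" by auto
    have DW: "y \<in> D v \<Longrightarrow> y \<in> W" for y
    proof -
      assume "y \<in> D v"
      then obtain zs' where "y \<in> V" "P y = P v @ zs'" unfolding D_def by blast
      then show "y \<in> W" using gg_D[OF good, of y zs'] unfolding W by simp
    qed
    have "set zs \<subseteq> EW"
    proof
      fix e assume e: "e \<in> set zs"
      then have "e \<in> E" using gpath_set[OF pth] by blast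
      moreover have "fst e \<in> W" "snd (snd e) \<in> W" using allD e DW by blast+
      ultimately show "e \<in> EW" unfolding EW_def by blast
    qed
    then have "gpath EW v zs x" by (rule gpath_subset[OF pth])
    moreover have "x \<in> W" using DW xD by blast
    ultimately show "x \<in> end_cone V E r' v" unfolding ce by blast
  qed
  have ceq: "end_cone V E r' v = D v" using cone_sub sub_cone by blast
  have "frontier V E r' v = {v}"
  proof -
    have "x = v" if "x \<in> D v" "level E r' x = level E r' v" for x
    proof -
      from that obtain zs where x: "x \<in> V" "P x = P v @ zs" unfolding D_def by auto
      have "gg r' x = gg r' v" using that(2) level_eq[OF x(1) r'] level_eq[OF v r'] by simp
      then have "zs = []" using gg_D[OF good x(2)] by simp
      then show ?thesis using P_inj x v by simp
    qed
    then show ?thesis unfolding frontier_def ceq using D_self[OF v] by auto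
  qed
  then show ?thesis using ceq by blast
qed

end



definition hm :: "('v \<Rightarrow> 'w) \<Rightarrow> 'v \<times> 'a \<times> 'v \<Rightarrow> 'w \<times> 'a \<times> 'w" where
  "hm h e = (h (fst e), fst (snd e), h (snd (snd e)))"

lemma map_lab_hm[simp]: "map (\<lambda>e. fst (snd e)) (map (hm h) es) = map (\<lambda>e. fst (snd e)) es"
  by (induction es) (auto simp: hm_def)

lemma gpath_map:
  assumes pres: "\<forall>x\<in>S. \<forall>y\<in>S. \<forall>a. (x,a,y) \<in> E \<longrightarrow> (h x, a, h y) \<in> E'"
  shows "gpath E u es w \<Longrightarrow> u \<in> S \<Longrightarrow> \<forall>e\<in>set es. snd (snd e) \<in> S \<Longrightarrow> gpath E' (h u) (map (hm h) es) (h w)"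
proof (induction es arbitrary: u)
  case Nil then show ?case by simp
next
  case (Cons e es)
  obtain u' a y where e: "e = (u',a,y)" by (cases e) auto
  with Cons.prems have "u' = u" "(u,a,y) \<in> E" "y \<in> S" "gpath E y es w" by auto
  then have "(h u, a, h y) \<in> E'" using pres Cons.prems(2) by blast
  then show ?case using Cons.IH[of y] Cons.prems \<open>gpath E y es w\<close> \<open>y \<in> S\<close> e \<open>u' = u\<close> by (auto simp: hm_def)
qed

locale dtree = rtree A ainv V E r
  for A :: "'a set" and ainv :: "'a \<Rightarrow> 'a" and V :: "'v set" and E :: "('v \<times> 'a \<times> 'v) set" and r :: 'v +
  assumes det: "deterministic E"
begin

lemma red_labels:
  assumes "gpath E u es w"
  shows "reduced_path ainv es \<longleftrightarrow> (\<forall>i. Suc i < length es \<longrightarrow>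
     map (\<lambda>e. fst (snd e)) es ! Suc i \<noteq> ainv (map (\<lambda>e. fst (snd e)) es ! i))"
  unfolding reduced_path_def
proof (intro iffI allI impI)
  fix i assume h: "\<forall>i. Suc i < length es \<longrightarrow> es ! Suc i \<noteq> inv_edge ainv (es ! i)" and i: "Suc i < length es"
  obtain x a y where ei: "es ! i = (x,a,y)" by (cases "es ! i") auto
  obtain y' b z where ej: "es ! Suc i = (y',b,z)" by (cases "es ! Suc i") auto
  have "y' = y" using gpath_nth[OF assms i] ei ej by simp
  have inE: "(x,a,y) \<in> E" "(y,b,z) \<in> E" using gpath_set[OF assms] ei ej nth_mem i \<open>y' = y\<close>
    by (metis Suc_lessD subsetD)+
  show "map (\<lambda>e. fst (snd e)) es ! Suc i \<noteq> ainv (map (\<lambda>e. fst (snd e)) es ! i)"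
  proof
    assume "map (\<lambda>e. fst (snd e)) es ! Suc i = ainv (map (\<lambda>e. fst (snd e)) es ! i)"
    then have "b = ainv a" using i ei ej by simp
    have "(y, ainv a, x) \<in> E" using edge_sym[OF inE(1)] .
    then have "z = x" using det inE(2) \<open>b = ainv a\<close> unfolding deterministic_def by blast
    then have "es ! Suc i = inv_edge ainv (es ! i)" using ei ej \<open>y' = y\<close> \<open>b = ainv a\<close> by (simp add: inv_edge_def)
    then show False using h i by blast
  qed
next
  fix i assume h: "\<forall>i. Suc i < length es \<longrightarrow>
     map (\<lambda>e. fst (snd e)) es ! Suc i \<noteq> ainv (map (\<lambda>e. fst (snd e)) es ! i)" and i: "Suc i < length es"
  show "es ! Suc i \<noteq> inv_edge ainv (es ! i)"
    using h[rule_format, OF i] i by (cases "es ! i") (auto simp: inv_edge_def)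
qed

definition Lw :: "'v \<Rightarrow> 'a list set" where
  "Lw v = {map (\<lambda>e. fst (snd e)) es | es. \<exists>x\<in>V. P x = P v @ es}"

lemma Lw_child:
  assumes u: "u \<in> V" and a: "a # s \<in> Lw u"
  shows "\<exists>w\<in>V. P w = P u @ [(u,a,w)] \<and> s \<in> Lw w"
proof -
  from a obtain es x where x: "x \<in> V" "P x = P u @ es" "map (\<lambda>e. fst (snd e)) es = a # s"
    unfolding Lw_def by auto
  then obtain e es' where es: "es = e # es'" "fst (snd e) = a" "map (\<lambda>e. fst (snd e)) es' = s" by (cases es) auto
  from D_path[OF x(1,2) u] es have "fst e = u" "P (snd (snd e)) = P (fst e) @ [e]" by auto
  moreover have "snd (snd e) \<in> V" using D_path[OF x(1,2) u] es D_sub by auto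
  moreover obtain w where "e = (u, a, w)" using \<open>fst e = u\<close> es(2) by (cases e) auto
  ultimately have w: "w \<in> V" "P w = P u @ [(u,a,w)]" by auto
  have "P x = P w @ es'" using x(2) es w(2) \<open>e = (u,a,w)\<close> by simp
  then have "s \<in> Lw w" using x(1) es(3) unfolding Lw_def by blast
  then show ?thesis using w by blast
qed

lemma Lw_deriv:
  assumes u: "u \<in> V" and w: "w \<in> V" and pw: "P w = P u @ [(u,a,w)]"
  shows "Lw w = {s. a # s \<in> Lw u}"
proof
  show "Lw w \<subseteq> {s. a # s \<in> Lw u}"
  proof
    fix s assume "s \<in> Lw w"
    then obtain es x where x: "x \<in> V" "P x = P w @ es" "s = map (\<lambda>e. fst (snd e)) es"
      unfolding Lw_def by blast
    then have "P x = P u @ ((u,a,w) # es)" using pw by simp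
    then have "a # s \<in> Lw u" using x unfolding Lw_def by force
    then show "s \<in> {s. a # s \<in> Lw u}" by simp
  qed
next
  show "{s. a # s \<in> Lw u} \<subseteq> Lw w"
  proof
    fix s assume "s \<in> {s. a # s \<in> Lw u}"
    then obtain w' where w': "w' \<in> V" "P w' = P u @ [(u,a,w')]" "s \<in> Lw w'" using Lw_child[OF u] by blast
    have "(u,a,w) \<in> E" "(u,a,w') \<in> E" using P_snoc_tgt[OF w pw] P_snoc_tgt[OF w'(1,2)] by auto
    then have "w' = w" using det unfolding deterministic_def by blast
    then show "s \<in> Lw w" using w' by simp
  qed
qed

lemma Lw_iso:
  assumes v: "v \<in> V" and v': "v' \<in> V" and hD: "h ` D v \<subseteq> D v'" and hv: "h v = v'"
    and pres: "\<forall>x\<in>D v. \<forall>y\<in>D v. \<forall>a. (x,a,y) \<in> E \<longrightarrow> (h x, a, h y) \<in> E"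
  shows "Lw v \<subseteq> Lw v'"
proof
  fix s assume "s \<in> Lw v"
  then obtain es x where x: "x \<in> V" "P x = P v @ es" and s: "s = map (\<lambda>e. fst (snd e)) es"
    unfolding Lw_def by blast
  from D_path[OF x v] have pth: "gpath E v es x" and allD: "\<forall>e\<in>set es. fst e \<in> D v \<and> snd (snd e) \<in> D v" by auto
  define es' where "es' = map (hm h) es"
  have pth': "gpath E v' es' (h x)" unfolding es'_def hv[symmetric]
    using gpath_map[OF pres pth D_self[OF v]] allD by blast
  have lab: "map (\<lambda>e. fst (snd e)) es' = map (\<lambda>e. fst (snd e)) es" unfolding es'_def by (simp add: hm_def)
  have len: "length es' = length es" unfolding es'_def by simp
  have red: "reduced_path ainv es" using P[OF x(1)] x(2) reduced_append by metis
  have red': "reduced_path ainv es'"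
    using red red_labels[OF pth] red_labels[OF pth'] lab len by simp
  have xD: "x \<in> D v" using x unfolding D_def by blast
  have hxD: "h x \<in> D v'" using hD xD by blast
  have junc: "hd es' \<noteq> inv_edge ainv (last (P v'))" if ne: "P v' \<noteq> []" "es' \<noteq> []"
  proof
    assume eq: "hd es' = inv_edge ainv (last (P v'))"
    have "es \<noteq> []" using ne len by auto
    then obtain e1 es1 where es1: "es = e1 # es1" by (cases es) auto
    have "fst e1 = v" using pth es1 by simp
    have y1: "snd (snd e1) \<in> D v" using allD es1 by simp
    have hd': "hd es' = (v', fst (snd e1), h (snd (snd e1)))" unfolding es'_def es1 hm_def
      using \<open>fst e1 = v\<close> hv by simp
    obtain xs where xs: "P v' = xs @ [last (P v')]" using ne(1) by (metis append_butlast_last_id)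
    have pl: "P (fst (last (P v'))) = xs" using P_len_less[OF v' xs] by simp
    have "h (snd (snd e1)) = fst (last (P v'))" using eq hd' by (cases "last (P v')") (auto simp: inv_edge_def)
    then have "P (h (snd (snd e1))) = xs" using pl by simp
    moreover have "h (snd (snd e1)) \<in> D v'" using hD y1 by blast
    ultimately show False using xs unfolding D_def by auto
  qed
  have "gpath E r (P v' @ es') (h x)" using P[OF v'] pth' by auto
  moreover have "reduced_path ainv (P v' @ es')" using P[OF v'] red' junc reduced_append by blast
  ultimately have "P (h x) = P v' @ es'" using P_unique by blast
  moreover have "h x \<in> V" using hxD D_sub by blast
  ultimately have "map (\<lambda>e. fst (snd e)) es' \<in> Lw v'" unfolding Lw_def by blast
  then show "s \<in> Lw v'" using lab s by simp
qed

end



context dtree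
begin

lemma combine:
  assumes r': "r' \<in> V" and v: "v \<in> V" and v0: "v0 \<in> V"
    and good: "lcp (P r') (P v) < length (P v)" and good0: "lcp (P r') (P v0) < length (P v0)"
    and i1: "end_isomorphic V E r' u v" and i2: "end_isomorphic V E r' u v0"
  shows "Lw v \<subseteq> Lw v0"
proof -
  define C where "C = end_cone V E r' u"
  define Fr where "Fr = frontier V E r' u"
  have FrC: "Fr \<subseteq> C" unfolding Fr_def C_def frontier_def by auto
  have c1: "end_cone V E r' v = D v" "frontier V E r' v = {v}" using cone[OF r' v good] by auto
  have c2: "end_cone V E r' v0 = D v0" "frontier V E r' v0 = {v0}" using cone[OF r' v0 good0] by auto
  from i1 obtain f where f: "bij_betw f C (D v)" "\<forall>x\<in>C. \<forall>y\<in>C. \<forall>a. (x,a,y) \<in> E \<longleftrightarrow> (f x, a, f y) \<in> E"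
    "f ` Fr = {v}" unfolding end_isomorphic_def C_def Fr_def c1 by blast
  from i2 obtain f0 where f0: "bij_betw f0 C (D v0)" "\<forall>x\<in>C. \<forall>y\<in>C. \<forall>a. (x,a,y) \<in> E \<longleftrightarrow> (f0 x, a, f0 y) \<in> E"
    "f0 ` Fr = {v0}" unfolding end_isomorphic_def C_def Fr_def c2 by blast
  define k where "k = f0 \<circ> inv_into C f"
  have inv1: "inv_into C f y \<in> C" "f (inv_into C f y) = y" if "y \<in> D v" for y
    using that f(1) by (auto simp: bij_betw_def inv_into_into f_inv_into_f)
  have kD: "k ` D v \<subseteq> D v0"
    using inv1 f0(1) unfolding k_def bij_betw_def by auto
  have pres: "\<forall>x\<in>D v. \<forall>y\<in>D v. \<forall>a. (x,a,y) \<in> E \<longrightarrow> (k x, a, k y) \<in> E"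
  proof (intro ballI allI impI)
    fix x y a assume x: "x \<in> D v" and y: "y \<in> D v" and e: "(x,a,y) \<in> E"
    then have "(f (inv_into C f x), a, f (inv_into C f y)) \<in> E" using inv1 by simp
    then have "(inv_into C f x, a, inv_into C f y) \<in> E" using f(2) inv1 x y by blast
    then show "(k x, a, k y) \<in> E" unfolding k_def using f0(2) inv1 x y by simp
  qed
  obtain w where w: "w \<in> Fr" "f w = v" using f(3) by blast
  have "inv_into C f v = w" using w FrC f(1) by (metis bij_betw_def inv_into_f_f subsetD)
  moreover have "f0 w = v0" using f0(3) w(1) by blast
  ultimately have kv: "k v = v0" unfolding k_def by simp
  show ?thesis by (rule Lw_iso[OF v v0 kD kv pres])
qed

lemma finite_Lw:
  assumes cf: "context_free A ainv V E"
  shows "finite (Lw ` V)"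
proof -
  from cf obtain r' F where r': "r' \<in> V" and F: "finite F" "F \<subseteq> V"
    and cov: "\<forall>v\<in>V. \<exists>u\<in>F. end_isomorphic V E r' u v"
    unfolding context_free_def by blast
  define good where "good v \<longleftrightarrow> lcp (P r') (P v) < length (P v)" for v
  define B where "B = {v \<in> V. \<not> good v}"
  have "P ` B \<subseteq> (\<lambda>n. take n (P r')) ` {..length (P r')}"
  proof
    fix y assume "y \<in> P ` B"
    then obtain v where v: "v \<in> B" "y = P v" by blast
    then have "lcp (P r') (P v) = length (P v)" using lcp_le2[of "P r'" "P v"] unfolding B_def good_def by simp
    then have "P r' = P v @ drop (length (P v)) (P r')" by (rule lcp_full)
    then have "P v = take (length (P v)) (P r')" "length (P v) \<le> length (P r')"
      by (metis append_eq_conv_conj, metis le_add1 length_append)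
    then show "y \<in> (\<lambda>n. take n (P r')) ` {..length (P r')}" using v by auto
  qed
  then have "finite (P ` B)" by (rule finite_subset) simp
  moreover have "inj_on P B" unfolding B_def inj_on_def using P_inj by blast
  ultimately have finB: "finite B" using finite_imageD by blast
  define pick where "pick u = (SOME v. v \<in> V \<and> good v \<and> end_isomorphic V E r' u v)" for u
  have "Lw ` V \<subseteq> Lw ` B \<union> (\<lambda>u. Lw (pick u)) ` F"
  proof
    fix L assume "L \<in> Lw ` V"
    then obtain v where v: "v \<in> V" "L = Lw v" by blast
    show "L \<in> Lw ` B \<union> (\<lambda>u. Lw (pick u)) ` F"
    proof (cases "good v")
      case False then show ?thesis using v unfolding B_def by blast
    next
      case True
      from cov v obtain u where u: "u \<in> F" "end_isomorphic V E r' u v" by blast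
      have ex: "\<exists>v. v \<in> V \<and> good v \<and> end_isomorphic V E r' u v" using u v True by blast
      have p: "pick u \<in> V" "good (pick u)" "end_isomorphic V E r' u (pick u)"
        using someI_ex[OF ex] unfolding pick_def by auto
      have "Lw v = Lw (pick u)"
        using combine[OF r' v(1) p(1) _ _ u(2) p(3)] combine[OF r' p(1) v(1) _ _ p(3) u(2)] True p(2)
        unfolding good_def by blast
      then show ?thesis using u v by blast
    qed
  qed
  moreover have "finite (Lw ` B \<union> (\<lambda>u. Lw (pick u)) ` F)" using finB F by simp
  ultimately show ?thesis using finite_subset by blast
qed

end



lemma run_edges_iff: "(x, a, y) \<in> run_edges ainv T p \<longleftrightarrow>
   (\<exists>\<tau>. y = x @ [\<tau>] \<and> y \<in> runs T p \<and> a = fst (snd \<tau>)) \<or>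
   (\<exists>\<tau>. x = y @ [\<tau>] \<and> x \<in> runs T p \<and> a = ainv (fst (snd \<tau>)))"
  unfolding run_edges_def by blast

lemma hm_simp[simp]: "hm h (x,a,y) = (h x, a, h y)"
  by (simp add: hm_def)

context dtree
begin

lemma construction:
  assumes finL: "finite (Lw ` V)"
  shows "\<exists>Q T p. reduced_pDFA A ainv Q T \<and> p \<in> Q \<and> rooted_iso V E r (runs T p) (run_edges ainv T p) []"
proof -
  from finite_imp_inj_to_nat_seg[OF finL] obtain stf n where stf0: "stf ` (Lw ` V) = {i::nat. i < n} \<and> inj_on stf (Lw ` V)"
    by (elim exE)
  then have stf: "stf ` (Lw ` V) = {i. i < n}" "inj_on stf (Lw ` V)" by auto
  define st where "st v = stf (Lw v)" for v
  have st_eq: "st x = st y \<longleftrightarrow> Lw x = Lw y" if "x \<in> V" "y \<in> V" for x y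
    unfolding st_def using inj_on_eq_iff[OF stf(2)] that by simp
  define Ed where "Ed = {(u,a,w). u \<in> V \<and> w \<in> V \<and> P w = P u @ [(u,a,w)]}"
  define T where "T = {(st u, a, st w) | u a w. (u,a,w) \<in> Ed}"
  define Q where "Q = st ` V"
  define p where "p = st r"
  have EdE: "(u,a,w) \<in> Ed \<Longrightarrow> (u,a,w) \<in> E" for u a w
    unfolding Ed_def using P_snoc_tgt by auto
  have "Q \<subseteq> {i. i < n}" unfolding Q_def st_def using stf(1) by auto
  then have finQ: "finite Q" using finite_subset by blast
  have agT: "a_graph A Q T" unfolding a_graph_def
  proof
    fix t assume "t \<in> T"
    then obtain u a w where e: "(u,a,w) \<in> Ed" "t = (st u, a, st w)" unfolding T_def by blast
    have "u \<in> V" "w \<in> V" "a \<in> A" using edgeV[OF EdE[OF e(1)]] by auto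
    then show "t \<in> Q \<times> A \<times> Q" unfolding Q_def using e(2) by blast
  qed
  have detT: "deterministic T"
    unfolding deterministic_def
  proof (intro allI impI)
    fix q a q1 q2 assume "(q,a,q1) \<in> T \<and> (q,a,q2) \<in> T"
    then obtain u1 w1 u2 w2 where e1: "(u1,a,w1) \<in> Ed" "q = st u1" "q1 = st w1"
      and e2: "(u2,a,w2) \<in> Ed" "q = st u2" "q2 = st w2" unfolding T_def by blast
    have V: "u1 \<in> V" "w1 \<in> V" "u2 \<in> V" "w2 \<in> V" "P w1 = P u1 @ [(u1,a,w1)]" "P w2 = P u2 @ [(u2,a,w2)]"
      using e1 e2 unfolding Ed_def by auto
    have "Lw u1 = Lw u2" using st_eq V e1 e2 by simp
    then have "Lw w1 = Lw w2" using Lw_deriv[of u1 w1 a] Lw_deriv[of u2 w2 a] V by simp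
    then show "q1 = q2" using st_eq V e1 e2 by simp
  qed
  have redT: "\<forall>q a q' s. (q,a,q') \<in> T \<longrightarrow> (q', ainv a, s) \<notin> T"
  proof (intro allI impI notI)
    fix q a q' s assume t1: "(q,a,q') \<in> T" and t2: "(q', ainv a, s) \<in> T"
    from t1 obtain u w where e1: "(u,a,w) \<in> Ed" "q' = st w" unfolding T_def by blast
    from t2 obtain w2 z where e2: "(w2, ainv a, z) \<in> Ed" "q' = st w2" unfolding T_def by blast
    have V: "u \<in> V" "w \<in> V" "w2 \<in> V" "z \<in> V" "P w = P u @ [(u,a,w)]" "P z = P w2 @ [(w2, ainv a,z)]"
      using e1 e2 unfolding Ed_def by auto
    have "Lw w = Lw w2" using st_eq V e1 e2 by simp
    moreover have "[ainv a] \<in> Lw w2" unfolding Lw_def using V by force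
    ultimately have "ainv a # [] \<in> Lw w" by simp
    then obtain z' where z': "z' \<in> V" "P z' = P w @ [(w, ainv a, z')]" using Lw_child[OF V(2)] by blast
    have "(w, ainv a, z') \<in> E" using P_snoc_tgt[OF z'] by simp
    moreover have "(w, ainv a, u) \<in> E" using edge_sym EdE e1 by blast
    ultimately have "z' = u" using det unfolding deterministic_def by blast
    then show False using z' V by simp
  qed
  have rp: "reduced_pDFA A ainv Q T" unfolding reduced_pDFA_def pDFA_def using finQ agT detT redT by blast
  have pQ: "p \<in> Q" unfolding p_def Q_def using rV by blast
  define \<phi> where "\<phi> x = map (hm st) (P x)" for x
  have presT: "\<forall>x\<in>V. \<forall>y\<in>V. \<forall>a. (x,a,y) \<in> Ed \<longrightarrow> (st x, a, st y) \<in> T" unfolding T_def by blast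
  have phi_path: "gpath T p (\<phi> x) (st x)" if x: "x \<in> V" for x
  proof -
    have "P x = P r @ P x" by simp
    from D_path[OF x this rV] have pth: "gpath E r (P x) x"
      and all: "\<forall>e\<in>set (P x). fst e \<in> D r \<and> snd (snd e) \<in> D r \<and> P (snd (snd e)) = P (fst e) @ [e]" by auto
    have "set (P x) \<subseteq> Ed"
    proof
      fix e assume e: "e \<in> set (P x)"
      obtain u a w where ee: "e = (u,a,w)" by (cases e) auto
      show "e \<in> Ed" using all e ee unfolding Ed_def D_def by auto
    qed
    then have "gpath Ed r (P x) x" using gpath_subset pth by metis
    moreover have "\<forall>e\<in>set (P x). snd (snd e) \<in> V" using all D_sub by blast
    ultimately show ?thesis unfolding \<phi>_def p_def using gpath_map[OF presT] rV by blast
  qed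
  have phi_runs: "\<phi> x \<in> runs T p" if "x \<in> V" for x
    using phi_path[OF that] unfolding runs_def by blast
  have phi_inj: "inj_on \<phi> V"
  proof (rule inj_onI)
    fix x y assume x: "x \<in> V" and y: "y \<in> V" and eq: "\<phi> x = \<phi> y"
    then have "map (\<lambda>e. fst (snd e)) (P x) = map (\<lambda>e. fst (snd e)) (P y)"
      unfolding \<phi>_def by (metis map_lab_hm)
    then have "P x = P y" using path_label_det[OF det] P[OF x] P[OF y] by blast
    then show "x = y" using P_inj x y by blast
  qed
  have phi_snoc: "(x, fst (snd \<tau>), y) \<in> E \<and> P y = P x @ [(x, fst (snd \<tau>), y)]"
    if x: "x \<in> V" and y: "y \<in> V" and eq: "\<phi> y = \<phi> x @ [\<tau>]" for x y \<tau>
  proof -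
    have "P y \<noteq> []" using eq unfolding \<phi>_def by auto
    then obtain xs where xs: "P y = xs @ [last (P y)]" by (metis append_butlast_last_id)
    define e where "e = last (P y)"
    have pe: "P (fst e) = xs" "fst e \<in> V" using P_len_less[OF y xs] unfolding e_def by auto
    have te: "snd (snd e) = y" "e \<in> E" using P_snoc_tgt[OF y xs] unfolding e_def by auto
    have "map (hm st) xs @ [hm st e] = \<phi> x @ [\<tau>]" using eq xs unfolding \<phi>_def e_def
      by (metis list.simps(8,9) map_append)
    then have m: "\<phi> (fst e) = \<phi> x" "hm st e = \<tau>" unfolding \<phi>_def using pe by auto
    have "fst e = x" using phi_inj m(1) pe x unfolding inj_on_def by blast
    have "fst (snd e) = fst (snd \<tau>)" using m(2) unfolding hm_def by auto
    then have "e = (x, fst (snd \<tau>), y)" using \<open>fst e = x\<close> te by (cases e) auto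
    then show ?thesis using te xs pe \<open>fst e = x\<close> unfolding e_def by auto
  qed
  have phi_surj: "\<rho> \<in> runs T p \<Longrightarrow> \<exists>x\<in>V. \<phi> x = \<rho>" for \<rho>
  proof (induction \<rho> rule: rev_induct)
    case Nil then show ?case using rV P_r unfolding \<phi>_def by (metis list.simps(8))
  next
    case (snoc \<tau> \<rho>)
    then obtain q where q: "gpath T p (\<rho> @ [\<tau>]) q" unfolding runs_def by blast
    then have r1: "gpath T p \<rho> (fst \<tau>)" "\<tau> \<in> T" by auto
    then have "\<rho> \<in> runs T p" unfolding runs_def by blast
    with snoc.IH obtain x where x: "x \<in> V" "\<phi> x = \<rho>" by blast
    have "fst \<tau> = st x" using gpath_end_unique[OF r1(1)] phi_path[OF x(1)] x(2) by simp
    from r1(2) obtain u a w where e: "(u,a,w) \<in> Ed" "\<tau> = (st u, a, st w)" unfolding T_def by blast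
    have V: "u \<in> V" "w \<in> V" "P w = P u @ [(u,a,w)]" using e unfolding Ed_def by auto
    have "Lw u = Lw x" using st_eq V x \<open>fst \<tau> = st x\<close> e by simp
    moreover have "[a] \<in> Lw u" unfolding Lw_def using V by force
    ultimately have "a # [] \<in> Lw x" by simp
    then obtain w' where w': "w' \<in> V" "P w' = P x @ [(x,a,w')]" using Lw_child[OF x(1)] by blast
    have "Lw w' = Lw w" using Lw_deriv[OF x(1) w'] Lw_deriv[OF V] \<open>Lw u = Lw x\<close> by simp
    then have "st w' = st w" using st_eq w' V by simp
    then have "\<phi> w' = \<rho> @ [\<tau>]" unfolding \<phi>_def using w'(2) x(2) e(2) \<open>fst \<tau> = st x\<close> \<phi>_def
      by simp
    then show ?case using w' by blast
  qed
  have bij: "bij_betw \<phi> V (runs T p)"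
    unfolding bij_betw_def using phi_inj phi_runs phi_surj by blast
  have phir: "\<phi> r = []" unfolding \<phi>_def by simp
  have edges: "(x,a,y) \<in> E \<longleftrightarrow> (\<phi> x, a, \<phi> y) \<in> run_edges ainv T p" if x: "x \<in> V" and y: "y \<in> V" for x y a
  proof
    assume e: "(x,a,y) \<in> E"
    have aA: "a \<in> A" using edgeV[OF e] by simp
    show "(\<phi> x, a, \<phi> y) \<in> run_edges ainv T p"
    proof (cases "P y = P x @ [(x,a,y)]")
      case True
      then have "\<phi> y = \<phi> x @ [(st x, a, st y)]" unfolding \<phi>_def by simp
      then show ?thesis unfolding run_edges_iff using phi_runs[OF y] by auto
    next
      case False
      then have "P x = P y @ [(y, ainv a, x)]" using edge_dich[OF e] by blast
      then have "\<phi> x = \<phi> y @ [(st y, ainv a, st x)]" unfolding \<phi>_def by simp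
      then show ?thesis unfolding run_edges_iff using phi_runs[OF x] ainv2[OF aA] by auto
    qed
  next
    assume "(\<phi> x, a, \<phi> y) \<in> run_edges ainv T p"
    then consider (f) \<tau> where "\<phi> y = \<phi> x @ [\<tau>]" "a = fst (snd \<tau>)"
      | (b) \<tau> where "\<phi> x = \<phi> y @ [\<tau>]" "a = ainv (fst (snd \<tau>))"
      unfolding run_edges_iff by blast
    then show "(x,a,y) \<in> E"
    proof cases
      case f then show ?thesis using phi_snoc[OF x y] by blast
    next
      case b then show ?thesis using phi_snoc[OF y x] edge_sym by blast
    qed
  qed
  have "rooted_iso V E r (runs T p) (run_edges ainv T p) []"
    unfolding rooted_iso_def using bij phir edges by blast
  then show ?thesis using rp pQ by blast
qed

end



lemma runs_prefix: "\<rho> @ \<sigma> \<in> runs T p \<Longrightarrow> \<rho> \<in> runs T p"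
  unfolding runs_def by auto

lemma runs_same_end:
  assumes "gpath T p \<rho> q" "gpath T p \<rho>' q"
  shows "\<rho> @ s \<in> runs T p \<longleftrightarrow> \<rho>' @ s \<in> runs T p"
proof -
  have aux: "\<rho> @ s \<in> runs T p \<longleftrightarrow> (\<exists>q'. gpath T q s q')" if g: "gpath T p \<rho> q" for \<rho>
  proof
    assume "\<rho> @ s \<in> runs T p"
    then obtain q' v where "gpath T p \<rho> v" "gpath T v s q'" unfolding runs_def by auto
    then show "\<exists>q'. gpath T q s q'" using gpath_end_unique[OF g] by blast
  next
    assume "\<exists>q'. gpath T q s q'"
    then obtain q' where "gpath T q s q'" by blast
    then have "gpath T p (\<rho> @ s) q'" using g by auto
    then show "\<rho> @ s \<in> runs T p" unfolding runs_def by blast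
  qed
  show ?thesis using aux[OF assms(1)] aux[OF assms(2)] by blast
qed

lemma G_det:
  assumes rp: "reduced_pDFA A ainv Q T"
  shows "deterministic (run_edges ainv T p)"
  unfolding deterministic_def
proof (intro allI impI)
  fix x a y1 y2 assume h: "(x, a, y1) \<in> run_edges ainv T p \<and> (x, a, y2) \<in> run_edges ainv T p"
  have detT: "deterministic T" using rp unfolding reduced_pDFA_def pDFA_def by blast
  have redT: "\<And>q a q' s. (q,a,q') \<in> T \<Longrightarrow> (q', ainv a, s) \<notin> T" using rp unfolding reduced_pDFA_def by blast
  have ff: "z1 = z2" if a1: "z1 = x @ [t1]" and a2: "z1 \<in> runs T p" and a3: "a = fst (snd t1)"
    and a4: "z2 = x @ [t2]" and a5: "z2 \<in> runs T p" and a6: "a = fst (snd t2)" for z1 z2 t1 t2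
  proof -
    obtain q1 q2 where "gpath T p (x @ [t1]) q1" "gpath T p (x @ [t2]) q2" using a1 a2 a4 a5 unfolding runs_def by auto
    then have g: "gpath T p x (fst t1)" "gpath T p x (fst t2)" "t1 \<in> T" "t2 \<in> T" by auto
    then have "fst t1 = fst t2" using gpath_end_unique by metis
    then have "t1 = t2" using g(3,4) detT a3 a6 unfolding deterministic_def
      by (cases t1; cases t2) auto
    then show ?thesis using a1 a4 by simp
  qed
  have fb: False if a1: "z1 = x @ [t1]" and a2: "z1 \<in> runs T p" and a3: "a = fst (snd t1)"
    and a4: "x = z2 @ [t2]" and a5: "a = ainv (fst (snd t2))" for z1 z2 t1 t2
  proof -
    obtain q1 where "gpath T p (z2 @ [t2] @ [t1]) q1" using a1 a2 a4 unfolding runs_def by auto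
    then have "t2 \<in> T" "t1 \<in> T" "fst t1 = snd (snd t2)" by auto
    then show False using redT[of "fst t2" "fst (snd t2)" "snd (snd t2)" "snd (snd t1)"] a3 a5
      by (cases t1; cases t2) auto
  qed
  from h show "y1 = y2" unfolding run_edges_iff
    using ff fb by (metis butlast_snoc)
qed

lemma bounded_det:
  assumes finA: "finite A" and ag: "a_graph A V E" and det: "deterministic E"
  shows "bounded_degree V E"
  unfolding bounded_degree_def
proof (intro exI ballI)
  fix v assume v: "v \<in> V"
  define g where "g a = (v, a, THE w. (v,a,w) \<in> E)" for a
  have sub: "{e \<in> E. fst e = v} \<subseteq> g ` A"
  proof
    fix e assume e: "e \<in> {e \<in> E. fst e = v}"
    then obtain a w where ee: "e = (v,a,w)" "(v,a,w) \<in> E" by (cases e) auto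
    have "a \<in> A" using ag ee unfolding a_graph_def by auto
    moreover have "(THE w. (v,a,w) \<in> E) = w"
      using ee det unfolding deterministic_def by (intro the_equality) auto
    ultimately show "e \<in> g ` A" unfolding g_def using ee by force
  qed
  show "finite {e \<in> E. fst e = v} \<and> card {e \<in> E. fst e = v} \<le> card A"
    using sub finA by (meson card_image_le finite_imageI finite_subset card_mono le_trans)
qed

locale bwd = rtree A ainv V E r
  for A :: "'a set" and ainv :: "'a \<Rightarrow> 'a" and V :: "'v set" and E :: "('v \<times> 'a \<times> 'v) set" and r :: 'v +
  fixes Q :: "nat set" and T :: "(nat \<times> 'a \<times> nat) set" and p :: nat and \<phi> :: "'v \<Rightarrow> (nat \<times> 'a \<times> nat) list"
  assumes rp: "reduced_pDFA A ainv Q T" and pQ: "p \<in> Q"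
    and bij: "bij_betw \<phi> V (runs T p)" and phir: "\<phi> r = []"
    and edg: "\<forall>x\<in>V. \<forall>y\<in>V. \<forall>a. (x,a,y) \<in> E \<longleftrightarrow> (\<phi> x, a, \<phi> y) \<in> run_edges ainv T p"
begin

definition \<psi> where "\<psi> = inv_into V \<phi>"

lemma psi: "\<rho> \<in> runs T p \<Longrightarrow> \<psi> \<rho> \<in> V \<and> \<phi> (\<psi> \<rho>) = \<rho>"
  using bij unfolding \<psi>_def bij_betw_def by (auto simp: inv_into_into f_inv_into_f)

lemma psi_phi: "x \<in> V \<Longrightarrow> \<psi> (\<phi> x) = x"
  using bij unfolding \<psi>_def bij_betw_def by (simp add: inv_into_f_f)

lemma phi_runs: "x \<in> V \<Longrightarrow> \<phi> x \<in> runs T p"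
  using bij unfolding bij_betw_def by blast

lemma phi_inj: "x \<in> V \<Longrightarrow> y \<in> V \<Longrightarrow> \<phi> x = \<phi> y \<Longrightarrow> x = y"
  using bij unfolding bij_betw_def inj_on_def by blast

lemma detE: "deterministic E"
  unfolding deterministic_def
proof (intro allI impI)
  fix u a v v' assume h: "(u,a,v) \<in> E \<and> (u,a,v') \<in> E"
  then have V: "u \<in> V" "v \<in> V" "v' \<in> V" using edgeV by auto
  then have "(\<phi> u, a, \<phi> v) \<in> run_edges ainv T p" "(\<phi> u, a, \<phi> v') \<in> run_edges ainv T p"
    using edg h by auto
  then have "\<phi> v = \<phi> v'" using G_det[OF rp] unfolding deterministic_def by blast
  then show "v = v'" using phi_inj V by blast
qed

lemma Sstep: "\<forall>x \<tau>. x \<in> V \<longrightarrow> \<phi> x = \<rho> @ [\<tau>] \<longrightarrow> \<psi> \<rho> \<in> V \<and> \<phi> (\<psi> \<rho>) = \<rho> \<and>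
   P x = P (\<psi> \<rho>) @ [(\<psi> \<rho>, fst (snd \<tau>), x)]"
proof (induction \<rho> rule: rev_induct)
  case Nil
  show ?case
  proof (intro allI impI)
    fix x \<tau> assume x: "x \<in> V" and eq: "\<phi> x = [] @ [\<tau>]"
    have pr: "\<psi> [] = r" using psi_phi[OF rV] phir by simp
    have "([], fst (snd \<tau>), \<phi> x) \<in> run_edges ainv T p" unfolding run_edges_iff using eq phi_runs[OF x] by auto
    then have e: "(r, fst (snd \<tau>), x) \<in> E" using edg rV x phir by auto
    have "P x = P r @ [(r, fst (snd \<tau>), x)]" using edge_dich[OF e] by auto
    then show "\<psi> [] \<in> V \<and> \<phi> (\<psi> []) = [] \<and> P x = P (\<psi> []) @ [(\<psi> [], fst (snd \<tau>), x)]"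
      using pr rV phir by simp
  qed
next
  case (snoc \<tau>0 \<sigma>)
  show ?case
  proof (intro allI impI)
    fix x \<tau> assume x: "x \<in> V" and eq: "\<phi> x = (\<sigma> @ [\<tau>0]) @ [\<tau>]"
    define \<rho> where "\<rho> = \<sigma> @ [\<tau>0]"
    have \<rho>R: "\<rho> \<in> runs T p" using phi_runs[OF x] eq runs_prefix unfolding \<rho>_def by metis
    define y where "y = \<psi> \<rho>"
    have y: "y \<in> V" "\<phi> y = \<rho>" using psi[OF \<rho>R] unfolding y_def by auto
    have "(\<phi> y, fst (snd \<tau>), \<phi> x) \<in> run_edges ainv T p" unfolding run_edges_iff
      using eq phi_runs[OF x] y unfolding \<rho>_def by auto
    then have e: "(y, fst (snd \<tau>), x) \<in> E" using edg y x by blast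
    have "P x = P y @ [(y, fst (snd \<tau>), x)]"
    proof (rule ccontr)
      assume "P x \<noteq> P y @ [(y, fst (snd \<tau>), x)]"
      then have py: "P y = P x @ [(x, ainv (fst (snd \<tau>)), y)]" using edge_dich[OF e] by blast
      have ih: "\<psi> \<sigma> \<in> V \<and> \<phi> (\<psi> \<sigma>) = \<sigma> \<and> P y = P (\<psi> \<sigma>) @ [(\<psi> \<sigma>, fst (snd \<tau>0), y)]"
        using snoc.IH y(1) y(2)[unfolded \<rho>_def] by blast
      then have "P y = P (\<psi> \<sigma>) @ [(\<psi> \<sigma>, fst (snd \<tau>0), y)]" "\<psi> \<sigma> \<in> V" "\<phi> (\<psi> \<sigma>) = \<sigma>" by auto
      then have "\<psi> \<sigma> = x" using py by simp
      then have "length (\<phi> x) = length \<sigma>" using \<open>\<phi> (\<psi> \<sigma>) = \<sigma>\<close> by simp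
      then show False using eq by simp
    qed
    then show "\<psi> (\<sigma> @ [\<tau>0]) \<in> V \<and> \<phi> (\<psi> (\<sigma> @ [\<tau>0])) = \<sigma> @ [\<tau>0] \<and>
       P x = P (\<psi> (\<sigma> @ [\<tau>0])) @ [(\<psi> (\<sigma> @ [\<tau>0]), fst (snd \<tau>), x)]"
      using y unfolding y_def \<rho>_def by simp
  qed
qed

lemma pre_fwd: "x \<in> V \<Longrightarrow> v \<in> V \<Longrightarrow> \<phi> x = \<phi> v @ zs \<Longrightarrow> \<exists>ys. P x = P v @ ys"
proof (induction zs arbitrary: x rule: rev_induct)
  case Nil then have "x = v" using phi_inj by simp
  then show ?case by (metis append_Nil2)
next
  case (snoc \<tau> zs)
  from Sstep[of "\<phi> v @ zs", rule_format, OF snoc.prems(1), of \<tau>] snoc.prems(3)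
  have s: "\<psi> (\<phi> v @ zs) \<in> V" "\<phi> (\<psi> (\<phi> v @ zs)) = \<phi> v @ zs"
    "P x = P (\<psi> (\<phi> v @ zs)) @ [(\<psi> (\<phi> v @ zs), fst (snd \<tau>), x)]" by auto
  from snoc.IH[OF s(1) snoc.prems(2) s(2)] obtain ys where "P (\<psi> (\<phi> v @ zs)) = P v @ ys" by blast
  then show ?case using s(3) by auto
qed

lemma pre_bwd: "x \<in> V \<Longrightarrow> v \<in> V \<Longrightarrow> P x = P v @ ys \<Longrightarrow> \<exists>zs. \<phi> x = \<phi> v @ zs"
proof (induction ys arbitrary: x rule: rev_induct)
  case Nil then have "x = v" using P_inj by simp
  then show ?case by (metis append_Nil2)
next
  case (snoc e ys)
  have px: "P x = (P v @ ys) @ [e]" using snoc.prems by simp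
  from P_len_less[OF snoc.prems(1) px] have y: "P (fst e) = P v @ ys" "fst e \<in> V" by auto
  from P_snoc_tgt[OF snoc.prems(1) px] have te: "snd (snd e) = x" "e \<in> E" by auto
  from snoc.IH[OF y(2) snoc.prems(2) y(1)] obtain zs where zs: "\<phi> (fst e) = \<phi> v @ zs" by blast
  have e: "(fst e, fst (snd e), x) \<in> E" using te by (cases e) auto
  then have "(\<phi> (fst e), fst (snd e), \<phi> x) \<in> run_edges ainv T p" using edg y(2) snoc.prems(1) by blast
  then consider (f) \<tau> where "\<phi> x = \<phi> (fst e) @ [\<tau>]"
    | (b) \<tau> where "\<phi> (fst e) = \<phi> x @ [\<tau>]"
    unfolding run_edges_iff by blast
  then show ?case
  proof cases
    case f then show ?thesis using zs by auto
  next
    case b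
    from Sstep[of "\<phi> x", rule_format, OF y(2) b(1)] have "P (fst e) = P (\<psi> (\<phi> x)) @ [(\<psi> (\<phi> x), fst (snd \<tau>), fst e)]" by blast
    then have "P (fst e) = P x @ [(x, fst (snd \<tau>), fst e)]" using psi_phi snoc.prems(1) by simp
    then show ?thesis using px y(1) by simp
  qed
qed

lemma D_image: "v \<in> V \<Longrightarrow> \<phi> ` D v = {z \<in> runs T p. \<exists>zs. z = \<phi> v @ zs}"
proof
  assume v: "v \<in> V"
  show "\<phi> ` D v \<subseteq> {z \<in> runs T p. \<exists>zs. z = \<phi> v @ zs}"
    using pre_bwd v phi_runs unfolding D_def by blast
  show "{z \<in> runs T p. \<exists>zs. z = \<phi> v @ zs} \<subseteq> \<phi> ` D v"
  proof
    fix z assume z: "z \<in> {z \<in> runs T p. \<exists>zs. z = \<phi> v @ zs}"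
    then obtain zs where "z \<in> runs T p" "z = \<phi> v @ zs" by blast
    with psi have x: "\<psi> z \<in> V" "\<phi> (\<psi> z) = \<phi> v @ zs" by auto
    then have "\<psi> z \<in> D v" using pre_fwd v unfolding D_def by blast
    then show "z \<in> \<phi> ` D v" using x \<open>z = \<phi> v @ zs\<close> by (metis image_eqI)
  qed
qed

end



lemma G_shift:
  assumes g: "gpath T p \<rho> q" "gpath T p \<rho>' q"
    and s: "\<rho> @ s1 \<in> runs T p" "\<rho> @ s2 \<in> runs T p"
  shows "(\<rho> @ s1, a, \<rho> @ s2) \<in> run_edges ainv T p \<longleftrightarrow> (\<rho>' @ s1, a, \<rho>' @ s2) \<in> run_edges ainv T p"
proof -
  have s': "\<rho>' @ s1 \<in> runs T p" "\<rho>' @ s2 \<in> runs T p" using runs_same_end[OF g] s by blast+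
  show ?thesis unfolding run_edges_iff using s s' by auto
qed

lemma end_iso_refl: "end_isomorphic V E r v v"
  unfolding end_isomorphic_def by (intro exI[of _ id]) auto

context bwd
begin

definition es :: "'v \<Rightarrow> nat" where "es v = snd (snd (last (\<phi> v)))"

lemma es_props:
  assumes v: "v \<in> V" and vr: "v \<noteq> r"
  shows "gpath T p (\<phi> v) (es v) \<and> es v \<in> Q"
proof -
  have ne: "\<phi> v \<noteq> []" using phi_inj[OF v rV] phir vr by auto
  obtain q where q: "gpath T p (\<phi> v) q" using phi_runs[OF v] unfolding runs_def by blast
  have "q = es v" using gpath_last[OF q ne] unfolding es_def by simp
  moreover have "last (\<phi> v) \<in> T" using gpath_set[OF q] ne by auto
  moreover have "T \<subseteq> Q \<times> A \<times> Q" using rp unfolding reduced_pDFA_def pDFA_def a_graph_def by blast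
  ultimately show ?thesis using q unfolding es_def by auto
qed

lemma end_iso_same:
  assumes v: "v \<in> V" and vr: "v \<noteq> r" and v': "v' \<in> V" and vr': "v' \<noteq> r" and eq: "es v = es v'"
  shows "end_isomorphic V E r v v'"
proof -
  have good: "lcp (P r) (P x) < length (P x)" if "x \<in> V" "x \<noteq> r" for x
    using P_inj[OF that(1) rV] that by auto
  have c1: "end_cone V E r v = D v" "frontier V E r v = {v}" using cone[OF rV v good[OF v vr]] by auto
  have c2: "end_cone V E r v' = D v'" "frontier V E r v' = {v'}" using cone[OF rV v' good[OF v' vr']] by auto
  define \<rho> where "\<rho> = \<phi> v"
  define \<rho>' where "\<rho>' = \<phi> v'"
  define q where "q = es v"
  have g: "gpath T p \<rho> q" "gpath T p \<rho>' q" using es_props[OF v vr] es_props[OF v' vr'] eq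
    unfolding \<rho>_def \<rho>'_def q_def by auto
  define ext where "ext z0 = {z \<in> runs T p. \<exists>zs. z = z0 @ zs}" for z0
  define h where "h z = \<rho>' @ drop (length \<rho>) z" for z
  define h' where "h' z = \<rho> @ drop (length \<rho>') z" for z
  have bh: "bij_betw h (ext \<rho>) (ext \<rho>')"
  proof (rule bij_betw_byWitness[where f' = h'])
    show "\<forall>a\<in>ext \<rho>. h' (h a) = a" unfolding ext_def h_def h'_def by auto
    show "\<forall>a'\<in>ext \<rho>'. h (h' a') = a'" unfolding ext_def h_def h'_def by auto
    show "h ` ext \<rho> \<subseteq> ext \<rho>'"
    proof
      fix z assume "z \<in> h ` ext \<rho>"
      then obtain zs where zs: "\<rho> @ zs \<in> runs T p" "z = \<rho>' @ zs" unfolding ext_def h_def by auto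
      then have "\<rho>' @ zs \<in> runs T p" using runs_same_end[OF g, of zs] by blast
      then show "z \<in> ext \<rho>'" unfolding ext_def using zs by blast
    qed
    show "h' ` ext \<rho>' \<subseteq> ext \<rho>"
    proof
      fix z assume "z \<in> h' ` ext \<rho>'"
      then obtain zs where zs: "\<rho>' @ zs \<in> runs T p" "z = \<rho> @ zs" unfolding ext_def h'_def by auto
      then have "\<rho> @ zs \<in> runs T p" using runs_same_end[OF g, of zs] by blast
      then show "z \<in> ext \<rho>" unfolding ext_def using zs by blast
    qed
  qed
  have bphi: "bij_betw \<phi> (D v) (ext \<rho>)"
    using bij_betw_subset[OF bij D_sub D_image[OF v]] unfolding ext_def \<rho>_def by simp
  have bpsi: "bij_betw \<psi> (ext \<rho>') (D v')"
    using bij_betw_inv_into_subset[OF bij D_sub D_image[OF v']] unfolding ext_def \<rho>'_def \<psi>_def by simp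
  define k where "k = \<psi> \<circ> (h \<circ> \<phi>)"
  have bk: "bij_betw k (D v) (D v')"
    unfolding k_def using bij_betw_trans[OF bij_betw_trans[OF bphi bh] bpsi] by simp
  have edges: "(x,a,y) \<in> E \<longleftrightarrow> (k x, a, k y) \<in> E" if x: "x \<in> D v" and y: "y \<in> D v" for x y a
  proof -
    have xV: "x \<in> V" and yV: "y \<in> V" using x y D_sub by auto
    have ex: "\<phi> x \<in> ext \<rho>" "\<phi> y \<in> ext \<rho>" using bphi x y unfolding bij_betw_def by auto
    then obtain s1 s2 where s: "\<phi> x = \<rho> @ s1" "\<phi> y = \<rho> @ s2" "\<rho> @ s1 \<in> runs T p" "\<rho> @ s2 \<in> runs T p"
      unfolding ext_def by auto
    have hx: "h (\<phi> x) = \<rho>' @ s1" "h (\<phi> y) = \<rho>' @ s2" unfolding h_def s by auto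
    have ex': "h (\<phi> x) \<in> runs T p" "h (\<phi> y) \<in> runs T p" using bh ex unfolding bij_betw_def ext_def by auto
    have "(x,a,y) \<in> E \<longleftrightarrow> (\<phi> x, a, \<phi> y) \<in> run_edges ainv T p" using edg xV yV by blast
    also have "\<dots> \<longleftrightarrow> (h (\<phi> x), a, h (\<phi> y)) \<in> run_edges ainv T p"
      unfolding hx by (simp only: s G_shift[OF g s(3,4)])
    also have "\<dots> \<longleftrightarrow> (k x, a, k y) \<in> E"
      using edg psi[OF ex'(1)] psi[OF ex'(2)] unfolding k_def by auto
    finally show ?thesis .
  qed
  have kv: "k v = v'"
  proof -
    have "h (\<phi> v) = \<rho>'" unfolding h_def \<rho>_def by simp
    then show ?thesis unfolding k_def \<rho>'_def using psi_phi[OF v'] by simp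
  qed
  show ?thesis unfolding end_isomorphic_def c1 c2 using bk edges kv by auto
qed

lemma cf:
  assumes finA: "finite A"
  shows "context_free A ainv V E"
proof -
  define pick where "pick q = (SOME v. v \<in> V \<and> v \<noteq> r \<and> es v = q)" for q
  define F where "F = insert r (pick ` es ` (V - {r}))"
  have finQ: "finite Q" using rp unfolding reduced_pDFA_def pDFA_def by blast
  have pk: "pick (es v) \<in> V \<and> pick (es v) \<noteq> r \<and> es (pick (es v)) = es v" if "v \<in> V" "v \<noteq> r" for v
  proof -
    have "\<exists>u. u \<in> V \<and> u \<noteq> r \<and> es u = es v" using that by blast
    then show ?thesis unfolding pick_def by (rule someI_ex)
  qed
  have FV: "F \<subseteq> V" unfolding F_def using pk rV by auto
  have "es ` (V - {r}) \<subseteq> Q" using es_props by auto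
  then have finF: "finite F" unfolding F_def using finQ finite_subset by blast
  have cov: "\<forall>v\<in>V. \<exists>u\<in>F. end_isomorphic V E r u v"
  proof
    fix v assume v: "v \<in> V"
    show "\<exists>u\<in>F. end_isomorphic V E r u v"
    proof (cases "v = r")
      case True
      have "r \<in> F" unfolding F_def by simp
      moreover have "end_isomorphic V E r r r" by (rule end_iso_refl)
      ultimately show ?thesis using True by blast
    next
      case False
      have "pick (es v) \<in> F" unfolding F_def using v False by blast
      moreover have "end_isomorphic V E r (pick (es v)) v"
        using end_iso_same[of "pick (es v)" v] pk[OF v False] v False by auto
      ultimately show ?thesis by blast
    qed
  qed
  show ?thesis unfolding context_free_def
    using finA ia ag invg connected bounded_det[OF finA ag detE] rV finF FV cov by blast
qed

end



theorem theorem3p9: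
  fixes A :: "'a set" and ainv :: "'a \<Rightarrow> 'a"
    and V :: "'v set" and E :: "('v \<times> 'a \<times> 'v) set" and r :: 'v
  assumes "finite A" and "involutive_alphabet A ainv"
    and "rooted_tree A ainv V E r"
  shows "(deterministic E \<and> context_free A ainv V E) \<longleftrightarrow>
    (\<exists>Q T p. reduced_pDFA A ainv Q T \<and> p \<in> Q \<and>
        rooted_iso V E r (runs T p) (run_edges ainv T p) [])"
proof
  assume h: "deterministic E \<and> context_free A ainv V E"
  interpret dtree A ainv V E r
    using assms h by (unfold_locales) auto
  show "\<exists>Q T p. reduced_pDFA A ainv Q T \<and> p \<in> Q \<and> rooted_iso V E r (runs T p) (run_edges ainv T p) []"
    using construction[OF finite_Lw] h by blast
next
  assume "\<exists>Q T p. reduced_pDFA A ainv Q T \<and> p \<in> Q \<and> rooted_iso V E r (runs T p) (run_edges ainv T p) []"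
  then obtain Q T p where h: "reduced_pDFA A ainv Q T" "p \<in> Q" "rooted_iso V E r (runs T p) (run_edges ainv T p) []"
    by blast
  from h(3) obtain \<phi> where phi: "bij_betw \<phi> V (runs T p)" "\<phi> r = []"
    "\<forall>x\<in>V. \<forall>y\<in>V. \<forall>a. (x,a,y) \<in> E \<longleftrightarrow> (\<phi> x, a, \<phi> y) \<in> run_edges ainv T p"
    unfolding rooted_iso_def by blast
  interpret bwd A ainv V E r Q T p \<phi>
    using assms h phi by (unfold_locales) auto
  show "deterministic E \<and> context_free A ainv V E" using detE cf[OF assms(1)] by blast
qed

end
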